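(* Let $n,x$ be integers with $1<x<n$, so that $G=C_{2n}(x,1,n)$ is a $5$-regular circulant graph. If $n\equiv x\equiv 2 \pmod 3$, then $G$ is word-representable.
   Context: Two distinct letters $x,y$ alternate in a word $w$ if, after deleting all other letters from $w$, the resulting word is of the form $xyxy\cdots$ or $yxyx\cdots$ (of even or odd length). A graph $G=(V,E)$ is word-representable if there is a word $w$ over the alphabet $V$, containing every letter of $V$ at least once, such that for all distinct $x,y\in V$, $xy\in E$ if and only if $x$ and $y$ alternate in $w$. For an integer $m$ and a set $R$ of positive integers each at most $m/2$, the circulant graph $C_m(R)$ has vertex set $\{0,1,\dots,m-1\}$, with $i$ and $j$ adjacent iff $\min(|i-j|,\,m-|i-j|)\in R$. $C_{2n}(x,1,n)$ denotes the circulant graph on $2n$ vertices with jump set $\{1,x,n\}$; it is $5$-regular exactly when $1<x<n$. *)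

theory Defs
  imports Main
begin

definition alternate :: "'a \<Rightarrow> 'a \<Rightarrow> 'a list \<Rightarrow> bool" where
  "alternate x y w \<longleftrightarrow>
     (let u = filter (\<lambda>z. z = x \<or> z = y) w in
      \<forall>i. Suc i < length u \<longrightarrow> u ! i \<noteq> u ! Suc i)"

definition word_representable :: "'a set \<Rightarrow> ('a \<Rightarrow> 'a \<Rightarrow> bool) \<Rightarrow> bool" where
  "word_representable V E \<longleftrightarrow>
     (\<exists>w. set w = V \<and>
        (\<forall>x\<in>V. \<forall>y\<in>V. x \<noteq> y \<longrightarrow> (E x y \<longleftrightarrow> alternate x y w)))"

definition circ_dist :: "nat \<Rightarrow> nat \<Rightarrow> nat \<Rightarrow> nat" where
  "circ_dist m i j = (let d = (if i \<le> j then j - i else i - j) in min d (m - d))"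

definition circulant_adj :: "nat \<Rightarrow> nat set \<Rightarrow> nat \<Rightarrow> nat \<Rightarrow> bool" where
  "circulant_adj m R i j \<longleftrightarrow> i < m \<and> j < m \<and> i \<noteq> j \<and> circ_dist m i j \<in> R"

end

theory Submission
  imports Defs
begin


definition keylt :: "(nat \<Rightarrow> nat) \<Rightarrow> nat \<Rightarrow> nat \<Rightarrow> bool" where
  "keylt h u v \<longleftrightarrow> h u < h v \<or> (h u = h v \<and> u < v)"

definition lst :: "nat \<Rightarrow> (nat \<Rightarrow> nat) \<Rightarrow> nat list" where
  "lst N h = concat (map (\<lambda>j. filter (\<lambda>z. h z = j) [0..<N]) [0..<4])"

definition ordw :: "nat \<Rightarrow> (nat \<Rightarrow> nat) \<Rightarrow> (nat \<Rightarrow> bool) \<Rightarrow> nat list" where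
  "ordw N h S = filter S (lst N h)"

definition piece :: "nat \<Rightarrow> (nat \<Rightarrow> nat) \<Rightarrow> (nat \<Rightarrow> bool) \<Rightarrow> (nat \<Rightarrow> bool) \<Rightarrow> nat list" where
  "piece N h A C = ordw N h A @ ordw N h C @ ordw N h (\<lambda>z. \<not> A z) @ ordw N h (\<lambda>z. \<not> C z)"

lemma pair_upt:
  assumes "u < v"
  shows "filter (\<lambda>z. z = u \<or> z = v) [0..<N] = (if u < N then [u] else []) @ (if v < N then [v] else [])"
  using assms by (induction N) auto

lemma lst_pair:
  assumes "u < N" "v < N" "h u < 4" "h v < 4" "keylt h u v"
  shows "filter (\<lambda>z. z = u \<or> z = v) (lst N h) = [u,v]"
proof -
  have uv: "u \<noteq> v" using assms(5) unfolding keylt_def by auto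
  have f: "filter (\<lambda>z. z = u \<or> z = v) (filter (\<lambda>z. h z = j) [0..<N])
        = filter (\<lambda>z. h z = j) (if u < v then [u,v] else [v,u])" for j
  proof -
    have "filter (\<lambda>z. z = u \<or> z = v) (filter (\<lambda>z. h z = j) [0..<N])
        = filter (\<lambda>z. h z = j) (filter (\<lambda>z. z = u \<or> z = v) [0..<N])"
      by (simp add: filter_filter conj_commute)
    also have "filter (\<lambda>z. z = u \<or> z = v) [0..<N] = (if u < v then [u,v] else [v,u])"
    proof (cases "u < v")
      case True then show ?thesis using pair_upt[OF True] assms by simp
    next
      case False then have "v < u" using uv by simp
      then show ?thesis using pair_upt[OF \<open>v<u\<close>, of N] assms False
        by (simp add: disj_commute)
    qed
    finally show ?thesis .
  qed
  have e: "[0..<4] = [0,1,2,3::nat]" by (simp add: upt_rec)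
  show ?thesis unfolding lst_def filter_concat map_map comp_def f e
    using assms uv unfolding keylt_def
    by (cases "h u"; cases "h v") (auto split: nat.splits)
qed

lemma ordw_pair:
  assumes "u < N" "v < N" "h u < 4" "h v < 4" "keylt h u v"
  shows "filter (\<lambda>z. z = u \<or> z = v) (ordw N h S) = filter S [u,v]"
proof -
  have "filter (\<lambda>z. z = u \<or> z = v) (ordw N h S) = filter S (filter (\<lambda>z. z = u \<or> z = v) (lst N h))"
    unfolding ordw_def by (simp add: filter_filter conj_commute)
  then show ?thesis using lst_pair[OF assms] by simp
qed

lemma piece_pair:
  assumes "u < N" "v < N" "h u < 4" "h v < 4" "keylt h u v"
  shows "filter (\<lambda>z. z = u \<or> z = v) (piece N h A C) =
     filter A [u,v] @ filter C [u,v] @ filter (\<lambda>z. \<not> A z) [u,v] @ filter (\<lambda>z. \<not> C z) [u,v]"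
  unfolding piece_def using ordw_pair[OF assms] by simp

lemma piece_edge:
  assumes "u < N" "v < N" "h u < 4" "h v < 4" "keylt h u v"
    "C v \<longrightarrow> C u" "A v \<longrightarrow> A u" "C u \<longrightarrow> A u" "C u \<longrightarrow> A v"
  shows "filter (\<lambda>z. z = u \<or> z = v) (piece N h A C) = [u,v,u,v]"
  unfolding piece_pair[OF assms(1-5)] using assms(6-9) by auto

definition ori :: "(nat \<Rightarrow> nat \<Rightarrow> bool) \<Rightarrow> (nat \<Rightarrow> nat) \<Rightarrow> nat \<Rightarrow> nat \<Rightarrow> bool" where
  "ori E h u v \<longleftrightarrow> E u v \<and> h u < h v"

definition Aset where
  "Aset E h a u \<longleftrightarrow> (\<exists>w v. (ori E h)\<^sup>*\<^sup>* w a \<and> (v = w \<or> ori E h w v) \<and> (ori E h)\<^sup>*\<^sup>* u v)"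

definition pc where
  "pc N E h ab = (let a = fst ab; b = snd ab in
     if (ori E h)\<^sup>*\<^sup>* a b then piece N h (Aset E h a) (\<lambda>u. (ori E h)\<^sup>*\<^sup>* u a)
     else piece N h (\<lambda>_. True) (\<lambda>u. (ori E h)\<^sup>*\<^sup>* u b))"

definition prs where
  "prs N E h = filter (\<lambda>(a,b). a \<noteq> b \<and> \<not> E a b \<and> keylt h a b) (List.product [0..<N] [0..<N])"

definition wrd where
  "wrd N E h = piece N h (\<lambda>_. True) (\<lambda>_. True) @ concat (map (pc N E h) (prs N E h))"

lemma concat_blocks:
  assumes "\<forall>ys\<in>set L. ys = [u,v,u,v]"
  shows "i < length (concat L) \<Longrightarrow> concat L ! i = (if even i then u else v)"
  using assms
proof (induction L arbitrary: i)
  case Nil then show ?case by simp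
next
  case (Cons ys L)
  then have ys: "ys = [u,v,u,v]" by simp
  show ?case
  proof (cases "i < 4")
    case True
    then have "i = 0 \<or> i = 1 \<or> i = 2 \<or> i = 3" by auto
    then show ?thesis using ys by (auto simp: nth_append)
  next
    case False
    then obtain j where j: "i = j + 4" using False by (intro that[of "i - 4"]) simp
    have "concat (ys # L) ! i = concat L ! j" using ys j by (simp add: numeral_eq_Suc)
    moreover have "j < length (concat L)" using Cons.prems(1) ys j by simp
    moreover have "even i = even j" using j by simp
    ultimately show ?thesis using Cons by simp
  qed
qed

lemma noadj_blocks:
  assumes "\<forall>ys\<in>set L. ys = [u,v,u,v]" "u \<noteq> v"
  shows "\<forall>i. Suc i < length (concat L) \<longrightarrow> concat L ! i \<noteq> concat L ! Suc i"
  using concat_blocks[OF assms(1)] assms(2) by auto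

lemma adj_eq:
  assumes "xs = p @ [c,c] @ s"
  shows "\<exists>i. Suc i < length xs \<and> xs ! i = xs ! Suc i"
  using assms by (intro exI[of _ "length p"]) (simp add: nth_append)

lemma alternate_sym: "alternate x y w = alternate y x w"
  unfolding alternate_def by (simp add: disj_commute)

lemma ori_rtr_h: "(ori E h)\<^sup>*\<^sup>* u v \<Longrightarrow> u = v \<or> h u < h v"
  by (induction rule: rtranclp_induct) (auto simp: ori_def)

lemma set_lst: "(\<And>u. u < N \<Longrightarrow> h u < 4) \<Longrightarrow> set (lst N h) = {0..<N}"
proof -
  assume a: "\<And>u. u < N \<Longrightarrow> h u < 4"
  have e: "[0..<4] = [0,1,2,3::nat]" by (simp add: upt_rec)
  have b: "h x = 0 \<or> h x = 1 \<or> h x = 2 \<or> h x = 3" if "x < N" for x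
  proof -
    have "h x < 4" using a that .
    then show ?thesis by arith
  qed
  show ?thesis unfolding lst_def e
  proof (rule set_eqI, rule iffI)
    fix x assume "x \<in> set (concat (map (\<lambda>j. filter (\<lambda>z. h z = j) [0..<N]) [0,1,2,3]))"
    then show "x \<in> {0..<N}" by auto
  next
    fix x assume "x \<in> {0..<N}"
    then have "x < N" by simp
    then show "x \<in> set (concat (map (\<lambda>j. filter (\<lambda>z. h z = j) [0..<N]) [0,1,2,3]))"
      using b[of x] by auto
  qed
qed

lemma generic:
  assumes Erange: "\<And>u v. E u v \<Longrightarrow> u < N \<and> v < N"
    and Esym: "\<And>u v. E u v \<Longrightarrow> E v u"
    and Eh: "\<And>u v. E u v \<Longrightarrow> h u \<noteq> h v"
    and hlt: "\<And>u. u < N \<Longrightarrow> h u < 4"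
    and ST: "\<And>a b w v. a < N \<Longrightarrow> b < N \<Longrightarrow> a \<noteq> b \<Longrightarrow> \<not> E a b \<Longrightarrow> keylt h a b \<Longrightarrow>
       (ori E h)\<^sup>*\<^sup>* a b \<Longrightarrow> (ori E h)\<^sup>*\<^sup>* w a \<Longrightarrow> ori E h w v \<Longrightarrow> (ori E h)\<^sup>*\<^sup>* b v \<Longrightarrow> False"
  shows "word_representable {0..<N} E"
  unfolding word_representable_def
proof (intro exI conjI ballI impI)
  let ?O = "ori E h"
  let ?w = "wrd N E h"
  have setl: "set (lst N h) = {0..<N}" by (rule set_lst[OF hlt])
  have so: "set (ordw N h S) \<subseteq> {0..<N}" for S
    unfolding ordw_def using setl filter_is_subset by metis
  have "set (piece N h A C) \<subseteq> {0..<N}" for A C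
    unfolding piece_def set_append using so by blast
  then have "set (pc N E h ab) \<subseteq> {0..<N}" for ab
    unfolding pc_def Let_def by auto
  moreover have "set (piece N h (\<lambda>_. True) (\<lambda>_. True)) = {0..<N}"
    unfolding piece_def ordw_def using setl by auto
  ultimately show "set ?w = {0..<N}" unfolding wrd_def by auto
  have filt: "filter P ?w = filter P (piece N h (\<lambda>_. True) (\<lambda>_. True)) @ concat (map (\<lambda>ab. filter P (pc N E h ab)) (prs N E h))" for P
    unfolding wrd_def by (simp add: filter_concat map_map comp_def)
  have edge: "alternate u v ?w" if "E u v" "keylt h u v" for u v
  proof -
    have uv: "u < N" "v < N" "h u < 4" "h v < 4" using Erange[OF that(1)] hlt by auto
    have ouv: "?O u v" using that Eh[OF that(1)] unfolding ori_def keylt_def by auto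
    have blk: "filter (\<lambda>z. z = u \<or> z = v) (piece N h A C) = [u,v,u,v]"
      if "C v \<longrightarrow> C u" "A v \<longrightarrow> A u" "C u \<longrightarrow> A u" "C u \<longrightarrow> A v" for A C
      using piece_edge[OF uv \<open>keylt h u v\<close> that] .
    have pcb: "filter (\<lambda>z. z = u \<or> z = v) (pc N E h ab) = [u,v,u,v]" for ab
    proof -
      have c1: "filter (\<lambda>z. z = u \<or> z = v) (piece N h (Aset E h a) (\<lambda>u. ?O\<^sup>*\<^sup>* u a)) = [u,v,u,v]" for a
      proof (rule blk)
        show "?O\<^sup>*\<^sup>* v a \<longrightarrow> ?O\<^sup>*\<^sup>* u a"
          using ouv by (blast intro: converse_rtranclp_into_rtranclp)
        show "Aset E h a v \<longrightarrow> Aset E h a u"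
          unfolding Aset_def using ouv by (blast intro: converse_rtranclp_into_rtranclp)
        show "?O\<^sup>*\<^sup>* u a \<longrightarrow> Aset E h a u"
          unfolding Aset_def by blast
        show "?O\<^sup>*\<^sup>* u a \<longrightarrow> Aset E h a v"
          unfolding Aset_def using ouv by blast
      qed
      have c2: "filter (\<lambda>z. z = u \<or> z = v) (piece N h (\<lambda>_. True) (\<lambda>u. ?O\<^sup>*\<^sup>* u b)) = [u,v,u,v]" for b
        apply (rule blk)
        using ouv by (auto intro: converse_rtranclp_into_rtranclp)
      show ?thesis unfolding pc_def Let_def using c1 c2 by simp
    qed
    have "filter (\<lambda>z. z = u \<or> z = v) ?w = concat ([u,v,u,v] # map (\<lambda>ab. [u,v,u,v]) (prs N E h))"
      unfolding filt using blk[of "\<lambda>_. True" "\<lambda>_. True"] pcb by simp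
    moreover have "u \<noteq> v" using that(2) unfolding keylt_def by auto
    ultimately show ?thesis unfolding alternate_def Let_def
      using noadj_blocks[of "[u,v,u,v] # map (\<lambda>ab. [u,v,u,v]) (prs N E h)" u v] by auto
  qed
  have nonedge: "\<not> alternate a b ?w" if "a < N" "b < N" "a \<noteq> b" "\<not> E a b" "keylt h a b" for a b
  proof -
    have ab: "a < N" "b < N" "h a < 4" "h b < 4" using that hlt by auto
    have mem: "(a,b) \<in> set (prs N E h)" unfolding prs_def using that by auto
    then obtain p1 p2 where sp: "prs N E h = p1 @ (a,b) # p2" by (meson split_list)
    have "\<exists>p s. filter (\<lambda>z. z = a \<or> z = b) (pc N E h (a,b)) = p @ [a,a] @ s \<or>
           filter (\<lambda>z. z = a \<or> z = b) (pc N E h (a,b)) = p @ [b,b] @ s"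
    proof (cases "?O\<^sup>*\<^sup>* a b")
      case True
      have nA: "\<not> Aset E h a b"
        unfolding Aset_def
      proof
        assume "\<exists>w v. ?O\<^sup>*\<^sup>* w a \<and> (v = w \<or> ?O w v) \<and> ?O\<^sup>*\<^sup>* b v"
        then obtain w v where wv: "?O\<^sup>*\<^sup>* w a" "v = w \<or> ?O w v" "?O\<^sup>*\<^sup>* b v" by blast
        show False
        proof (cases "v = w")
          case True
          then have "?O\<^sup>*\<^sup>* b a" using wv by auto
          then show False using ori_rtr_h[of E h b a] that(3,5) unfolding keylt_def by auto
        next
          case False
          then show False using ST[OF that True wv(1)] wv by auto
        qed
      qed
      have aA: "Aset E h a a" unfolding Aset_def by blast
      have Cb: "\<not> ?O\<^sup>*\<^sup>* b a"
        using ori_rtr_h[of E h b a] that(3,5) unfolding keylt_def by auto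
      have "filter (\<lambda>z. z = a \<or> z = b) (pc N E h (a,b)) = [a,a,b,b]"
        unfolding pc_def Let_def using True nA aA Cb by (simp add: piece_pair[OF ab that(5)])
      then show ?thesis by (intro exI[of _ "[]"] exI[of _ "[b,b]"]) simp
    next
      case False
      have "filter (\<lambda>z. z = a \<or> z = b) (pc N E h (a,b)) = [a,b,b,a]"
        unfolding pc_def Let_def using False by (simp add: piece_pair[OF ab that(5)])
      then show ?thesis by (intro exI[of _ "[a]"] exI[of _ "[a]"]) simp
    qed
    then obtain p s c where "filter (\<lambda>z. z = a \<or> z = b) (pc N E h (a,b)) = p @ [c,c] @ s" by blast
    then have "\<exists>p s. filter (\<lambda>z. z = a \<or> z = b) ?w = p @ [c,c] @ s"
      unfolding filt sp
      by (intro exI[where x="filter (\<lambda>z. z = a \<or> z = b) (piece N h (\<lambda>_. True) (\<lambda>_. True)) @ concat (map (\<lambda>ab. filter (\<lambda>z. z = a \<or> z = b) (pc N E h ab)) p1) @ p"] exI[where x="s @ concat (map (\<lambda>ab. filter (\<lambda>z. z = a \<or> z = b) (pc N E h ab)) p2)"]) simp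
    then obtain p s where "filter (\<lambda>z. z = a \<or> z = b) ?w = p @ [c,c] @ s" by blast
    from adj_eq[OF this] obtain i where
      "Suc i < length (filter (\<lambda>z. z = a \<or> z = b) ?w)"
      "filter (\<lambda>z. z = a \<or> z = b) ?w ! i = filter (\<lambda>z. z = a \<or> z = b) ?w ! Suc i" by blast
    then show ?thesis unfolding alternate_def Let_def by blast
  qed
  fix x y assume xy: "x \<in> {0..<N}" "y \<in> {0..<N}" "x \<noteq> y"
  show "E x y \<longleftrightarrow> alternate x y ?w"
  proof
    assume "E x y"
    then show "alternate x y ?w"
    proof (cases "h x < h y")
      case True
      then show ?thesis using edge[of x y] \<open>E x y\<close> unfolding keylt_def by blast
    next
      case False
      then have "h y < h x" using Eh[OF \<open>E x y\<close>] by simp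
      then have "alternate y x ?w" using edge[of y x] Esym[OF \<open>E x y\<close>] unfolding keylt_def by blast
      then show ?thesis using alternate_sym by metis
    qed
  next
    assume al: "alternate x y ?w"
    show "E x y"
    proof (rule ccontr)
      assume ne: "\<not> E x y"
      have "keylt h x y \<or> keylt h y x" using xy unfolding keylt_def by auto
      moreover have "\<not> E y x" using ne Esym by blast
      moreover have "alternate y x ?w" using al alternate_sym by metis
      ultimately show False using nonedge[of x y] nonedge[of y x] xy ne al by auto
    qed
  qed
qed

lemma rtr_step:
  assumes "(ori E h)\<^sup>*\<^sup>* u v" "u \<noteq> v"
  shows "\<exists>p. ori E h u p \<and> (ori E h)\<^sup>*\<^sup>* p v"
  using assms by (induction rule: converse_rtranclp_induct) auto

lemma ST_abs:
  assumes Erange: "\<And>u v. E u v \<Longrightarrow> u < N \<and> v < N"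
    and hlt: "\<And>u. u < N \<Longrightarrow> h u < 4"
    and H3: "\<And>v. v < N \<Longrightarrow> h v = 3 \<Longrightarrow> v = t"
    and F1: "\<And>w. E w t \<Longrightarrow> h w = 0 \<Longrightarrow> w = zz"
    and F2: "\<And>p. E p t \<Longrightarrow> h p = 2 \<Longrightarrow> p = tb"
    and F3: "\<And>a. E a tb \<Longrightarrow> h a = 1 \<Longrightarrow> a = tc"
    and F4: "\<not> E zz tc"
    and prem: "a \<noteq> b" "\<not> E a b" "(ori E h)\<^sup>*\<^sup>* a b" "(ori E h)\<^sup>*\<^sup>* w a"
      "ori E h w v" "(ori E h)\<^sup>*\<^sup>* b v"
  shows False
proof -
  let ?O = "ori E h"
  obtain p where p: "?O a p" "?O\<^sup>*\<^sup>* p b" using rtr_step[OF prem(3,1)] by blast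
  have "p \<noteq> b" using p(1) prem(2) unfolding ori_def by blast
  then obtain q where q: "?O p q" "?O\<^sup>*\<^sup>* q b" using rtr_step[OF p(2)] by blast
  have hq: "q = b \<or> h q < h b" using ori_rtr_h[OF q(2)] .
  have hw: "w = a \<or> h w < h a" using ori_rtr_h[OF prem(4)] .
  have hv: "b = v \<or> h b < h v" using ori_rtr_h[OF prem(6)] .
  have Ewv: "E w v" "h w < h v" using prem(5) unfolding ori_def by auto
  have hap: "h a < h p" "h p < h q" using p(1) q(1) unfolding ori_def by auto
  have vN: "v < N" "w < N" using Erange[OF Ewv(1)] by auto
  have hv4: "h v < 4" using hlt[OF vN(1)] .
  have not_both: "\<not> (w = a \<and> v = b)" using Ewv(1) prem(2) by blast
  have hw0: "h w = 0" and hv3: "h v = 3" using hq hw hv hap hv4 not_both by auto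
  have vt: "v = t" using H3[OF vN(1) hv3] .
  have wz: "w = zz" using F1 Ewv(1) hw0 vt by blast
  show False
  proof (cases "w = a")
    case False
    then have ha: "h a \<ge> 1" using hw hw0 by auto
    have qb: "q = b" and bv: "b = v" using hq hv hap ha hv3 by auto
    have hp2: "h p = 2" and ha1: "h a = 1" using hq hv hap ha hv3 qb bv by auto
    have "E p t" using q(1) qb bv vt unfolding ori_def by auto
    then have pt2: "p = tb" using F2 hp2 by blast
    have "E a tb" using p(1) pt2 unfolding ori_def by auto
    then have at3: "a = tc" using F3 ha1 by blast
    obtain r where r: "?O w r" "?O\<^sup>*\<^sup>* r a" using rtr_step[OF prem(4) False] by blast
    have "r = a" using ori_rtr_h[OF r(2)] r(1) ha1 hw0 unfolding ori_def by auto
    then show False using r(1) wz at3 F4 unfolding ori_def by auto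
  next
    case True
    then have vb: "v \<noteq> b" using not_both by blast
    have hb: "h b < 3" using hv vb hv3 by auto
    have hb2: "h b = 2" and hp1: "h p = 1" and qb: "q = b" using hq hap hb True hw0 by auto
    obtain s where s: "?O b s" "?O\<^sup>*\<^sup>* s v" using rtr_step[OF prem(6)] vb by blast
    have "s = v" using ori_rtr_h[OF s(2)] s(1) hb2 hv3 unfolding ori_def by auto
    then have "E b t" using s(1) vt unfolding ori_def by auto
    then have bt2: "b = tb" using F2 hb2 by blast
    have "E p tb" using q(1) qb bt2 unfolding ori_def by auto
    then have "p = tc" using F3 hp1 by blast
    then show False using p(1) True wz F4 unfolding ori_def by auto
  qed
qed



lemma adj_iff:
  assumes "1 < x" "x < n"
  shows "circulant_adj (2*n) {1, x, n} u v \<longleftrightarrow> u < 2*n \<and> v < 2*n \<and>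
    (v = u+1 \<or> u = v+1 \<or> v = u+x \<or> u = v+x \<or> v = u+n \<or> u = v+n \<or>
     v + 1 = u + 2*n \<or> u + 1 = v + 2*n \<or> v + x = u + 2*n \<or> u + x = v + 2*n)"
  using assms unfolding circulant_adj_def circ_dist_def Let_def min_def
  by (auto split: if_splits)

definition hh :: "nat \<Rightarrow> nat \<Rightarrow> nat" where
  "hh n i = (if i = 2*n - 1 then 3 else i mod 3)"

lemma hh3: "hh n v = 3 \<longleftrightarrow> v = 2*n - 1"
  unfolding hh_def by auto

lemma hhk: "k < 3 \<Longrightarrow> hh n v = k \<longleftrightarrow> v \<noteq> 2*n - 1 \<and> v mod 3 = k"
  unfolding hh_def by auto

lemma modk: "(k::nat) mod 3 \<noteq> 0 \<Longrightarrow> (u + k) mod 3 \<noteq> u mod 3"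
  by presburger
lemma Eh_mod:
  fixes n x u v :: nat
  assumes "1 < x" "x < n" "n mod 3 = 2" "x mod 3 = 2" "u < 2*n" "v < 2*n"
    "u \<noteq> 2*n - 1" "v \<noteq> 2*n - 1"
  and "(v = u+1 \<or> u = v+1 \<or> v = u+x \<or> u = v+x \<or> v = u+n \<or> u = v+n \<or>
     v + 1 = u + 2*n \<or> u + 1 = v + 2*n \<or> v + x = u + 2*n \<or> u + x = v + 2*n)"
  shows "u mod 3 \<noteq> v mod 3"
proof -
  have k1: "(2*n - x) mod 3 \<noteq> 0" using assms(2-4) by presburger
  have "\<exists>k. k mod 3 \<noteq> 0 \<and> (v = u + k \<or> u = v + k)"
    using assms(9)
  proof (elim disjE)
    assume "v + x = u + 2*n" then show ?thesis using k1 assms(2) by (intro exI[of _ "2*n-x"]) auto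
  next
    assume "u + x = v + 2*n" then show ?thesis using k1 assms(2) by (intro exI[of _ "2*n-x"]) auto
  next
    assume "v + 1 = u + 2*n" then have False using assms(6,8) by arith then show ?thesis ..
  next
    assume "u + 1 = v + 2*n" then have False using assms(5,7) by arith then show ?thesis ..
  qed (use assms(3,4) in \<open>force+\<close>)
  then obtain k where "k mod 3 \<noteq> 0" "v = u + k \<or> u = v + k" by blast
  then show ?thesis using modk[of k u] modk[of k v] by auto
qed

lemma adj_ne:
  fixes n x u v :: nat
  assumes "1 < x" "x < n"
  and "(v = u+1 \<or> u = v+1 \<or> v = u+x \<or> u = v+x \<or> v = u+n \<or> u = v+n \<or>
     v + 1 = u + 2*n \<or> u + 1 = v + 2*n \<or> v + x = u + 2*n \<or> u + x = v + 2*n)"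
  and "u < 2*n" "v < 2*n"
  shows "u \<noteq> v"
  using assms by auto

lemma F1: fixes n x w :: nat
  assumes "1 < x" "x < n" "n mod 3 = 2" "x mod 3 = 2" "w < 2*n" "w mod 3 = 0"
  and "(t = w+1 \<or> w = t+1 \<or> t = w+x \<or> w = t+x \<or> t = w+n \<or> w = t+n \<or>
     t + 1 = w + 2*n \<or> w + 1 = t + 2*n \<or> t + x = w + 2*n \<or> w + x = t + 2*n)"
  and "t = 2*n - 1"
  shows "w = 0"
proof -
  have a0: "n = 3*(n div 3) + 2" using mult_div_mod_eq[of 3 n] assms(3) by linarith
  then obtain a where a: "n = 3*a+2" by blast
  have b0: "x = 3*(x div 3) + 2" using mult_div_mod_eq[of 3 x] assms(4) by linarith
  then obtain b where b: "x = 3*b+2" by blast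
  have c0: "w = 3*(w div 3) + 0" using mult_div_mod_eq[of 3 w] assms(6) by linarith
  then obtain c where c: "w = 3*c+0" by blast
  have ht: "t = 6*a+3" using assms(8) unfolding a by simp
  have g: "3*c+0 = 0"
    using assms(2,5,7) unfolding ht a b c by (elim disjE; (linarith | presburger))
  show ?thesis using g unfolding a c by simp
qed

lemma F2: fixes n x w :: nat
  assumes "1 < x" "x < n" "n mod 3 = 2" "x mod 3 = 2" "w < 2*n" "w mod 3 = 2"
  and "(t = w+1 \<or> w = t+1 \<or> t = w+x \<or> w = t+x \<or> t = w+n \<or> w = t+n \<or>
     t + 1 = w + 2*n \<or> w + 1 = t + 2*n \<or> t + x = w + 2*n \<or> w + x = t + 2*n)"
  and "t = 2*n - 1"
  shows "w = 2*n - 2"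
proof -
  have a0: "n = 3*(n div 3) + 2" using mult_div_mod_eq[of 3 n] assms(3) by linarith
  then obtain a where a: "n = 3*a+2" by blast
  have b0: "x = 3*(x div 3) + 2" using mult_div_mod_eq[of 3 x] assms(4) by linarith
  then obtain b where b: "x = 3*b+2" by blast
  have c0: "w = 3*(w div 3) + 2" using mult_div_mod_eq[of 3 w] assms(6) by linarith
  then obtain c where c: "w = 3*c+2" by blast
  have ht: "t = 6*a+3" using assms(8) unfolding a by simp
  have g: "3*c+2 = 6*a+2"
    using assms(2,5,7) unfolding ht a b c by (elim disjE; (linarith | presburger))
  show ?thesis using g unfolding a c by simp
qed

lemma F3: fixes n x w :: nat
  assumes "1 < x" "x < n" "n mod 3 = 2" "x mod 3 = 2" "w < 2*n" "w mod 3 = 1"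
  and "(t = w+1 \<or> w = t+1 \<or> t = w+x \<or> w = t+x \<or> t = w+n \<or> w = t+n \<or>
     t + 1 = w + 2*n \<or> w + 1 = t + 2*n \<or> t + x = w + 2*n \<or> w + x = t + 2*n)"
  and "t = 2*n - 2"
  shows "w = 2*n - 3"
proof -
  have a0: "n = 3*(n div 3) + 2" using mult_div_mod_eq[of 3 n] assms(3) by linarith
  then obtain a where a: "n = 3*a+2" by blast
  have b0: "x = 3*(x div 3) + 2" using mult_div_mod_eq[of 3 x] assms(4) by linarith
  then obtain b where b: "x = 3*b+2" by blast
  have c0: "w = 3*(w div 3) + 1" using mult_div_mod_eq[of 3 w] assms(6) by linarith
  then obtain c where c: "w = 3*c+1" by blast
  have ht: "t = 6*a+2" using assms(8) unfolding a by simp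
  have g: "3*c+1 = 6*a+1"
    using assms(2,5,7) unfolding ht a b c by (elim disjE; (linarith | presburger))
  show ?thesis using g unfolding a c by simp
qed

lemma F4: fixes n x :: nat
  assumes "1 < x" "x < n" "n mod 3 = 2" "x mod 3 = 2" "t = 2*n - 3"
  shows "\<not> (t = w+1 \<or> w = t+1 \<or> t = w+x \<or> w = t+x \<or> t = w+n \<or> w = t+n \<or>
     t + 1 = w + 2*n \<or> w + 1 = t + 2*n \<or> t + x = w + 2*n \<or> w + x = t + 2*n) \<or> w \<noteq> 0"
proof (cases "w = 0")
  case True
  have a0: "n = 3*(n div 3) + 2" using mult_div_mod_eq[of 3 n] assms(3) by linarith
  then obtain a where a: "n = 3*a+2" by blast
  have b0: "x = 3*(x div 3) + 2" using mult_div_mod_eq[of 3 x] assms(4) by linarith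
  then obtain b where b: "x = 3*b+2" by blast
  have ht: "t = 6*a + 1" using assms(5) unfolding a by simp
  have "\<not> (t = 1 \<or> 0 = t+1 \<or> t = x \<or> 0 = t+x \<or> t = n \<or> 0 = t+n \<or>
     t + 1 = 2*n \<or> 1 = t + 2*n \<or> t + x = 2*n \<or> x = t + 2*n)"
  proof
    assume "t = 1 \<or> 0 = t+1 \<or> t = x \<or> 0 = t+x \<or> t = n \<or> 0 = t+n \<or>
     t + 1 = 2*n \<or> 1 = t + 2*n \<or> t + x = 2*n \<or> x = t + 2*n"
    then show False
    proof (elim disjE)
      assume "t = x" then have "6*a+1 = 3*b+2" using ht b by simp
      then show False by presburger
    next
      assume "t = n" then have "6*a+1 = 3*a+2" using ht a by simp
      then show False by presburger
    next
      assume "t + x = 2*n" then have "6*a+1+(3*b+2) = 2*(3*a+2)" using ht a b by simp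
      then show False by presburger
    qed (use ht a b assms(1,2) in linarith)+
  qed
  then show ?thesis using True by simp
qed simp

theorem theorem21:
  fixes n x :: nat
  assumes "1 < x" and "x < n"
    and "n mod 3 = 2" and "x mod 3 = 2"
  shows "word_representable {0..<2*n} (circulant_adj (2*n) {1, x, n})"
proof (rule generic[where h = "hh n"])
  let ?E = "circulant_adj (2*n) {1, x, n}"
  note A = adj_iff[OF assms(1,2)]
  show "\<And>u v. ?E u v \<Longrightarrow> u < 2*n \<and> v < 2*n" unfolding circulant_adj_def by auto
  show "\<And>u v. ?E u v \<Longrightarrow> ?E v u" unfolding A by auto
  show "\<And>u. u < 2*n \<Longrightarrow> hh n u < 4" unfolding hh_def by auto
  show "hh n u \<noteq> hh n v" if "?E u v" for u v
  proof -
    have d: "u < 2*n" "v < 2*n" "(v = u+1 \<or> u = v+1 \<or> v = u+x \<or> u = v+x \<or> v = u+n \<or> u = v+n \<or>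
     v + 1 = u + 2*n \<or> u + 1 = v + 2*n \<or> v + x = u + 2*n \<or> u + x = v + 2*n)"
      using that unfolding A by auto
    have ne: "u \<noteq> v" using adj_ne[OF assms(1,2) d(3) d(1,2)] .
    show ?thesis
    proof (cases "u = 2*n - 1 \<or> v = 2*n - 1")
      case True
      then show ?thesis using ne unfolding hh_def by auto
    next
      case False
      then show ?thesis using Eh_mod[OF assms d(1,2) _ _ d(3)] unfolding hh_def by auto
    qed
  qed
  show "False" if "a < 2*n" "b < 2*n" "a \<noteq> b" "\<not> ?E a b" "keylt (hh n) a b"
       "(ori ?E (hh n))\<^sup>*\<^sup>* a b" "(ori ?E (hh n))\<^sup>*\<^sup>* w a" "ori ?E (hh n) w v"
       "(ori ?E (hh n))\<^sup>*\<^sup>* b v" for a b w v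
  proof (rule ST_abs[where N = "2*n" and t = "2*n-1" and zz = 0 and tb = "2*n-2" and tc = "2*n-3" and a = a and b = b and w = w and v = v])
    show "\<And>u v. ?E u v \<Longrightarrow> u < 2*n \<and> v < 2*n" unfolding circulant_adj_def by auto
    show "\<And>u. u < 2*n \<Longrightarrow> hh n u < 4" unfolding hh_def by auto
    show "\<And>v. v < 2*n \<Longrightarrow> hh n v = 3 \<Longrightarrow> v = 2*n-1" using hh3 by blast
    show "w = 0" if "?E w (2*n-1)" "hh n w = 0" for w
    proof -
      have m: "w mod 3 = 0" using that(2) unfolding hh_def by (auto split: if_splits)
      have d: "w < 2*n" using that(1) unfolding A by auto
      show ?thesis using F1[OF assms d m _ refl] that(1) unfolding A by blast
    qed
    show "p = 2*n-2" if "?E p (2*n-1)" "hh n p = 2" for p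
    proof -
      have m: "p mod 3 = 2" using that(2) unfolding hh_def by (auto split: if_splits)
      have d: "p < 2*n" using that(1) unfolding A by auto
      show ?thesis using F2[OF assms d m _ refl] that(1) unfolding A by blast
    qed
    show "q = 2*n-3" if "?E q (2*n-2)" "hh n q = 1" for q
    proof -
      have m: "q mod 3 = 1" using that(2) unfolding hh_def by (auto split: if_splits)
      have d: "q < 2*n" using that(1) unfolding A by auto
      show ?thesis using F3[OF assms d m _ refl] that(1) unfolding A by blast
    qed
    show "\<not> ?E 0 (2*n-3)"
      using F4[OF assms refl, of 0] unfolding A by auto
  qed (use that in blast)+
qed

end
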